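(* Let $L=\ell_1$, viewed as a subset of $\ell_2$ with the $\ell_2$-norm topology, let $u\in\ell_2\setminus\ell_1$, and let $C=\operatorname{co}(L\cup\{u\})$. Then $\operatorname{icr} C=C\setminus(L\cup\{u\})\neq\emptyset$, while $L\subseteq\operatorname{fri} C$; in particular $\emptyset\neq\operatorname{icr} C\neq\operatorname{fri} C$.
   Context: $\operatorname{co}$ denotes the convex hull (set of finite convex combinations). For a convex set $C$, a convex subset $F\subseteq C$ is a face of $C$ if for every $x\in F$ and all $y,z\in C$ with $x\in(y,z)=\{(1-t)y+tz:t\in(0,1)\}$ we have $y,z\in F$; $F_{\min}(x,C)$ is the intersection of all faces of $C$ containing $x\in C$. $\operatorname{icr} C=\{x\in C:\forall y\in C\ \exists z\in C,\ x\in(y,z)\}$; $\operatorname{fri} C=\{x\in C: C\subseteq\overline{F_{\min}(x,C)}\}$. *)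

theory Defs
  imports "HOL-Analysis.Analysis"
begin

definition l1 :: "(nat \<Rightarrow> real) set" where
  "l1 = {x. summable (\<lambda>n. \<bar>x n\<bar>)}"

definition l2 :: "(nat \<Rightarrow> real) set" where
  "l2 = {x. summable (\<lambda>n. (x n)\<^sup>2)}"

definition l2norm :: "(nat \<Rightarrow> real) \<Rightarrow> real" where
  "l2norm x = sqrt (\<Sum>n. (x n)\<^sup>2)"

definition l2closure :: "(nat \<Rightarrow> real) set \<Rightarrow> (nat \<Rightarrow> real) set" where
  "l2closure S = {y \<in> l2. \<forall>e>0. \<exists>z\<in>S. l2norm (\<lambda>n. y n - z n) < e}"

definition oseg :: "(nat \<Rightarrow> real) \<Rightarrow> (nat \<Rightarrow> real) \<Rightarrow> (nat \<Rightarrow> real) set" where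
  "oseg y z = {(\<lambda>n. (1 - t) * y n + t * z n) | t. 0 < t \<and> t < 1}"

definition co :: "(nat \<Rightarrow> real) set \<Rightarrow> (nat \<Rightarrow> real) set" where
  "co S = {x. \<exists>(k::nat) (a::nat \<Rightarrow> real) (p::nat \<Rightarrow> nat \<Rightarrow> real).
              (\<forall>i<k. 0 \<le> a i \<and> p i \<in> S) \<and> (\<Sum>i<k. a i) = 1 \<and>
              x = (\<lambda>n. \<Sum>i<k. a i * p i n)}"

definition cvx :: "(nat \<Rightarrow> real) set \<Rightarrow> bool" where
  "cvx S \<longleftrightarrow> (\<forall>y\<in>S. \<forall>z\<in>S. \<forall>t::real. 0 \<le> t \<and> t \<le> 1 \<longrightarrow>
                 (\<lambda>n. (1 - t) * y n + t * z n) \<in> S)"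

definition is_face :: "(nat \<Rightarrow> real) set \<Rightarrow> (nat \<Rightarrow> real) set \<Rightarrow> bool" where
  "is_face F C \<longleftrightarrow> F \<subseteq> C \<and> cvx F \<and>
     (\<forall>x\<in>F. \<forall>y\<in>C. \<forall>z\<in>C. x \<in> oseg y z \<longrightarrow> y \<in> F \<and> z \<in> F)"

definition Fmin :: "(nat \<Rightarrow> real) \<Rightarrow> (nat \<Rightarrow> real) set \<Rightarrow> (nat \<Rightarrow> real) set" where
  "Fmin x C = \<Inter>{F. is_face F C \<and> x \<in> F}"

definition icr :: "(nat \<Rightarrow> real) set \<Rightarrow> (nat \<Rightarrow> real) set" where
  "icr C = {x \<in> C. \<forall>y\<in>C. \<exists>z\<in>C. x \<in> oseg y z}"

definition fri :: "(nat \<Rightarrow> real) set \<Rightarrow> (nat \<Rightarrow> real) set" where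
  "fri C = {x \<in> C. C \<subseteq> l2closure (Fmin x C)}"

end

theory Submission
  imports Defs
begin

lemma l1_lin: assumes "x \<in> l1" "y \<in> l1" shows "(\<lambda>n. a * x n + b * y n) \<in> l1"
proof -
  have sx: "summable (\<lambda>n. \<bar>x n\<bar>)" and sy: "summable (\<lambda>n. \<bar>y n\<bar>)" using assms by (auto simp: l1_def)
  have "summable (\<lambda>n. \<bar>a\<bar> * \<bar>x n\<bar> + \<bar>b\<bar> * \<bar>y n\<bar>)"
    using sx sy by (intro summable_add summable_mult)
  then have "summable (\<lambda>n. \<bar>a * x n + b * y n\<bar>)"
    by (rule summable_comparison_test') (auto simp: abs_mult intro: order.trans[OF abs_triangle_ineq])
  then show ?thesis by (simp add: l1_def)
qed

lemma l1_zero: "(\<lambda>n. 0) \<in> l1" by (simp add: l1_def)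

lemma l1_sum: assumes "\<And>i. i \<in> I \<Longrightarrow> p i \<in> l1" shows "(\<lambda>n. \<Sum>i\<in>I. a i * p i n) \<in> l1"
proof -
  have "summable (\<lambda>n. \<Sum>i\<in>I. \<bar>a i\<bar> * \<bar>p i n\<bar>)"
    using assms by (intro summable_sum summable_mult) (auto simp: l1_def)
  then have "summable (\<lambda>n. \<bar>\<Sum>i\<in>I. a i * p i n\<bar>)"
    by (rule summable_comparison_test') (auto simp: abs_mult intro: order.trans[OF sum_abs])
  then show ?thesis by (simp add: l1_def)
qed

lemma l1_l2: assumes "x \<in> l1" shows "x \<in> l2"
proof -
  have sx: "summable (\<lambda>n. \<bar>x n\<bar>)" using assms by (auto simp: l1_def)
  define S where "S = (\<Sum>n. \<bar>x n\<bar>)"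
  have b: "\<bar>x n\<bar> \<le> S" for n
    using sum_le_suminf[OF sx, of "{n}"] by (simp add: S_def)
  have "summable (\<lambda>n. S * \<bar>x n\<bar>)" using sx by (rule summable_mult)
  moreover have "norm ((x n)\<^sup>2) \<le> S * \<bar>x n\<bar>" for n
  proof -
    have "\<bar>x n\<bar> * \<bar>x n\<bar> \<le> S * \<bar>x n\<bar>" by (rule mult_right_mono[OF b]) simp
    then show ?thesis by (simp add: power2_eq_square)
  qed
  ultimately have "summable (\<lambda>n. (x n)\<^sup>2)"
    by (rule summable_comparison_test')
  then show ?thesis by (simp add: l2_def)
qed

lemma l2_lin: assumes "x \<in> l2" "y \<in> l2" shows "(\<lambda>n. a * x n + b * y n) \<in> l2"
proof -
  have sx: "summable (\<lambda>n. (x n)\<^sup>2)" and sy: "summable (\<lambda>n. (y n)\<^sup>2)" using assms by (auto simp: l2_def)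
  have "summable (\<lambda>n. 2*a\<^sup>2 * (x n)\<^sup>2 + 2*b\<^sup>2 * (y n)\<^sup>2)"
    using sx sy by (intro summable_add summable_mult)
  moreover have "norm ((a * x n + b * y n)\<^sup>2) \<le> 2*a\<^sup>2 * (x n)\<^sup>2 + 2*b\<^sup>2 * (y n)\<^sup>2" for n
  proof -
    have "0 \<le> (a * x n - b * y n)\<^sup>2" by simp
    then have "(a * x n + b * y n)\<^sup>2 \<le> 2*a\<^sup>2 * (x n)\<^sup>2 + 2*b\<^sup>2 * (y n)\<^sup>2" by (simp add: power2_eq_square algebra_simps)
    then show ?thesis by simp
  qed
  ultimately have "summable (\<lambda>n. (a * x n + b * y n)\<^sup>2)"
    by (rule summable_comparison_test')
  then show ?thesis by (simp add: l2_def)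
qed

lemma l2_closure_l1: assumes "y \<in> l2" shows "y \<in> l2closure l1"
proof -
  have sy: "summable (\<lambda>n. (y n)\<^sup>2)" using assms by (simp add: l2_def)
  have "\<exists>z\<in>l1. l2norm (\<lambda>n. y n - z n) < e" if e: "e > 0" for e
  proof -
    have "(\<lambda>N. \<Sum>n<N. (y n)\<^sup>2) \<longlonglongrightarrow> (\<Sum>n. (y n)\<^sup>2)" using sy by (rule summable_LIMSEQ)
    from LIMSEQ_D[OF this, of "e\<^sup>2"] e obtain N where N: "dist (\<Sum>n<N. (y n)\<^sup>2) (\<Sum>n. (y n)\<^sup>2) < e\<^sup>2"
      by (auto simp: dist_real_def)
    define z where "z = (\<lambda>n. if n < N then y n else 0)"
    have "z \<in> l1" unfolding l1_def z_def mem_Collect_eq by (rule summable_finite[of "{..<N}"]) (auto split: if_splits)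
    define g where "g = (\<lambda>n. if n < N then (y n)\<^sup>2 else 0)"
    have sg: "summable g" unfolding g_def by (rule summable_finite[of "{..<N}"]) (auto split: if_splits)
    have g: "suminf g = (\<Sum>n<N. (y n)\<^sup>2)"
      by (subst suminf_finite[of "{..<N}"]) (auto simp: g_def)
    have "(\<Sum>n. (y n - z n)\<^sup>2) = (\<Sum>n. (y n)\<^sup>2 - g n)"
      by (rule arg_cong[where f=suminf]) (auto simp: z_def g_def)
    also have "\<dots> = (\<Sum>n. (y n)\<^sup>2) - (\<Sum>n<N. (y n)\<^sup>2)"
      using suminf_diff[OF sy sg] g by simp
    also have "\<dots> < e\<^sup>2" using N by (simp add: dist_real_def)
    finally have "l2norm (\<lambda>n. y n - z n) < sqrt (e\<^sup>2)"
      unfolding l2norm_def by (rule real_sqrt_less_mono)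
    with e have "l2norm (\<lambda>n. y n - z n) < e" by simp
    with \<open>z \<in> l1\<close> show ?thesis by blast
  qed
  with assms show ?thesis by (simp add: l2closure_def)
qed


definition cset :: "(nat \<Rightarrow> real) \<Rightarrow> (nat \<Rightarrow> real) set" where
  "cset u = {x. \<exists>t l. 0 \<le> t \<and> t \<le> 1 \<and> l \<in> l1 \<and> x = (\<lambda>n. (1 - t) * l n + t * u n)}"

lemma cset_co: "cset u \<subseteq> co (l1 \<union> {u})"
proof
  fix x assume "x \<in> cset u"
  then obtain t l where t: "0 \<le> t" "t \<le> 1" "l \<in> l1" and x: "x = (\<lambda>n. (1 - t) * l n + t * u n)"
    by (auto simp: cset_def)
  define a where "a = (\<lambda>i::nat. if i = 0 then 1 - t else t)"
  define p where "p = (\<lambda>i::nat. if i = 0 then l else u)"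
  have *: "(\<forall>i<2. 0 \<le> a i \<and> p i \<in> l1 \<union> {u}) \<and> (\<Sum>i<2. a i) = 1 \<and> x = (\<lambda>n. \<Sum>i<2. a i * p i n)"
    using t by (auto simp: a_def p_def x numeral_2_eq_2 lessThan_Suc)
  show "x \<in> co (l1 \<union> {u})" unfolding co_def mem_Collect_eq
    by (rule exI[of _ "2::nat"], rule exI[of _ a], rule exI[of _ p]) (rule *)
qed

lemma co_cset: "co (l1 \<union> {u}) \<subseteq> cset u"
proof
  fix x assume "x \<in> co (l1 \<union> {u})"
  then obtain k :: nat and a :: "nat \<Rightarrow> real" and p :: "nat \<Rightarrow> nat \<Rightarrow> real" where H: "(\<forall>i<k. 0 \<le> a i \<and> p i \<in> l1 \<union> {u}) \<and> (\<Sum>i<k. a i) = 1 \<and>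
       x = (\<lambda>n. \<Sum>i<k. a i * p i n)" unfolding co_def mem_Collect_eq by iprover
  have h: "\<forall>i<k. 0 \<le> a i \<and> p i \<in> l1 \<union> {u}" "(\<Sum>i<k. a i) = 1" using H by simp_all
  have x: "x = (\<lambda>n. \<Sum>i<k. a i * p i n)" using H by simp
  define I where "I = {..<k} \<inter> {i. p i = u}"
  define J where "J = {..<k} \<inter> - {i. p i = u}"
  define t where "t = (\<Sum>i\<in>I. a i)"
  define w where "w = (\<lambda>n. \<Sum>i\<in>J. a i * p i n)"
  have Jl: "p i \<in> l1" if "i \<in> J" for i using h(1) that by (auto simp: J_def)
  have wl: "w \<in> l1" unfolding w_def using Jl by (rule l1_sum)
  have split: "(\<Sum>i<k. f i) = (\<Sum>i\<in>I. f i) + (\<Sum>i\<in>J. f i)" for f :: "nat \<Rightarrow> real"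
  proof -
    have "I \<inter> J = {}" "I \<union> J = {..<k}" by (auto simp: I_def J_def)
    moreover have "finite I" "finite J" by (auto simp: I_def J_def)
    ultimately show ?thesis using sum.union_disjoint[of I J f] by simp
  qed
  have tJ: "t + (\<Sum>i\<in>J. a i) = 1" using h(2) split[of a] by (simp add: t_def)
  have t0: "0 \<le> t" unfolding t_def using h(1) by (intro sum_nonneg) (auto simp: I_def)
  have J0: "0 \<le> (\<Sum>i\<in>J. a i)" using h(1) by (intro sum_nonneg) (auto simp: J_def)
  have xn: "x n = t * u n + w n" for n
  proof -
    have "x n = (\<Sum>i\<in>I. a i * p i n) + w n" unfolding x w_def using split[of "\<lambda>i. a i * p i n"] by simp
    moreover have "(\<Sum>i\<in>I. a i * p i n) = (\<Sum>i\<in>I. a i * u n)" by (rule sum.cong) (auto simp: I_def)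
    moreover have "(\<Sum>i\<in>I. a i * u n) = t * u n" unfolding t_def by (rule sum_distrib_right[symmetric])
    ultimately show ?thesis by simp
  qed
  have w0: "w n = 0" if "t = 1" for n
  proof -
    have s0: "(\<Sum>i\<in>J. a i) = 0" using tJ that by simp
    have "finite J" by (simp add: J_def)
    moreover have "\<And>i. i \<in> J \<Longrightarrow> 0 \<le> a i" using h(1) by (auto simp: J_def)
    ultimately have "\<forall>i\<in>J. a i = 0" using s0 sum_nonneg_eq_0_iff by blast
    then show ?thesis unfolding w_def by simp
  qed
  define l where "l = (\<lambda>n. (1/(1-t)) * w n + 0 * w n)"
  have "l \<in> l1" unfolding l_def using wl wl by (rule l1_lin)
  moreover have "x n = (1 - t) * l n + t * u n" for n
  proof (cases "t = 1")
    case True then show ?thesis using w0[of n] xn[of n] by (simp add: l_def)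
  next
    case False then show ?thesis using xn[of n] by (simp add: l_def)
  qed
  moreover have "0 \<le> t" "t \<le> 1" using t0 J0 tJ by linarith+
  ultimately show "x \<in> cset u" unfolding cset_def mem_Collect_eq
    by (intro exI[of _ t] exI[of _ l]) (simp add: fun_eq_iff)
qed

lemma co_eq: "co (l1 \<union> {u}) = cset u" using co_cset cset_co by blast

lemma uniq: assumes "l \<in> l1" "c \<noteq> 0" "\<And>n. c * u n = l n" shows "u \<in> l1"
proof -
  have "(\<lambda>n. (1/c) * l n + 0 * l n) \<in> l1" using assms(1) by (intro l1_lin)
  moreover have "(\<lambda>n. (1/c) * l n + 0 * l n) = u" using assms by (auto simp: fun_eq_iff field_simps)
  ultimately show ?thesis by simp
qed


lemma cset_l2: assumes "u \<in> l2" "x \<in> cset u" shows "x \<in> l2"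
proof -
  obtain t l where "l \<in> l1" "x = (\<lambda>n. (1 - t) * l n + t * u n)" using assms(2) unfolding cset_def by blast
  then show ?thesis using l2_lin[OF l1_l2 assms(1), of l "1 - t" t] by simp
qed

lemma cset_memI: assumes "0 \<le> t" "t \<le> 1" "l \<in> l1" "\<And>n. x n = (1 - t) * l n + t * u n"
  shows "x \<in> cset u"
  unfolding cset_def mem_Collect_eq
  by (intro exI[of _ t] exI[of _ l]) (simp add: assms fun_eq_iff)

lemma cset_memE: assumes "x \<in> cset u"
  obtains t l where "0 \<le> t" "t \<le> 1" "l \<in> l1" "\<And>n. x n = (1 - t) * l n + t * u n"
  using assms unfolding cset_def by auto

lemma osegE: assumes "x \<in> oseg y z" obtains th where "0 < th" "th < 1" "\<And>n. x n = (1 - th) * y n + th * z n"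
  using assms unfolding oseg_def by auto

lemma osegI: assumes "0 < th" "th < 1" "\<And>n. x n = (1 - th) * y n + th * z n" shows "x \<in> oseg y z"
  unfolding oseg_def using assms by (auto simp: fun_eq_iff intro!: exI[of _ th])

lemma u_in: "u \<in> cset u" by (rule cset_memI[of 1 "\<lambda>n. 0"]) (auto simp: l1_zero)
lemma z_in: "(\<lambda>n. 0) \<in> cset u" by (rule cset_memI[of 0 "\<lambda>n. 0"]) (auto simp: l1_zero)
lemma l1_in: "l \<in> l1 \<Longrightarrow> l \<in> cset u" by (rule cset_memI[of 0 l]) auto

lemma icr_sub: assumes "u \<notin> l1" "x \<in> icr (cset u)" shows "x \<in> cset u - (l1 \<union> {u})"
proof -
  have xC: "x \<in> cset u" and ic: "\<forall>y\<in>cset u. \<exists>z\<in>cset u. x \<in> oseg y z" using assms(2) by (auto simp: icr_def)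
  have "x \<notin> l1"
  proof
    assume xl: "x \<in> l1"
    obtain z where zC: "z \<in> cset u" and o: "x \<in> oseg u z" using ic u_in by blast
    from o obtain th where th: "0 < th" "th < 1" "\<And>n. x n = (1 - th) * u n + th * z n" by (rule osegE) blast
    obtain s m where s: "0 \<le> s" "s \<le> 1" "m \<in> l1" "\<And>n. z n = (1 - s) * m n + s * u n"
      using zC by (rule cset_memE) blast
    have "u \<in> l1"
    proof (rule uniq)
      show "(\<lambda>n. 1 * x n + (- (th * (1 - s))) * m n) \<in> l1" using xl s(3) by (rule l1_lin)
      have "0 \<le> th * s" using th s by simp
      then show "(1 - th) + th * s \<noteq> 0" using th by linarith
      show "((1 - th) + th * s) * u n = 1 * x n + (- (th * (1 - s))) * m n" for n
        using th(3)[of n] s(4)[of n] by (simp add: algebra_simps)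
    qed
    with assms(1) show False by simp
  qed
  moreover have "x \<noteq> u"
  proof
    assume xu: "x = u"
    obtain z where zC: "z \<in> cset u" and o: "x \<in> oseg (\<lambda>n. 0) z" using ic z_in by blast
    from o obtain th where th: "0 < th" "th < 1" "\<And>n. x n = (1 - th) * 0 + th * z n" by (rule osegE) blast
    obtain s m where s: "0 \<le> s" "s \<le> 1" "m \<in> l1" "\<And>n. z n = (1 - s) * m n + s * u n"
      using zC by (rule cset_memE) blast
    have "u \<in> l1"
    proof (rule uniq)
      show "(\<lambda>n. (th * (1 - s)) * m n + 0 * m n) \<in> l1" using s(3) s(3) by (rule l1_lin)
      have "th * s \<le> th * 1" using th s by (intro mult_left_mono) auto
      then show "1 - th * s \<noteq> 0" using th by linarith
      show "(1 - th * s) * u n = (th * (1 - s)) * m n + 0 * m n" for n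
        using th(3)[of n] s(4)[of n] xu by (simp add: algebra_simps)
    qed
    with assms(1) show False by simp
  qed
  ultimately show ?thesis using xC by simp
qed

lemma icr_sup: assumes "x \<in> cset u - (l1 \<union> {u})" shows "x \<in> icr (cset u)"
proof -
  have xc: "x \<in> cset u" using assms by simp
  obtain t l where t: "0 \<le> t" "t \<le> 1" "l \<in> l1" and xn: "\<And>n. x n = (1 - t) * l n + t * u n"
    using xc by (rule cset_memE) blast
  have "t \<noteq> 0"
  proof
    assume "t = 0" then have "x = l" using xn by (simp add: fun_eq_iff)
    with assms t show False by simp
  qed
  moreover have "t \<noteq> 1"
  proof
    assume "t = 1" then have "x = u" using xn by (simp add: fun_eq_iff)
    with assms show False by simp
  qed
  ultimately have t0: "0 < t" and t1: "t < 1" using t by auto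
  have "\<exists>z\<in>cset u. x \<in> oseg y z" if yC: "y \<in> cset u" for y
  proof -
    obtain s m where s: "0 \<le> s" "s \<le> 1" "m \<in> l1" and yn: "\<And>n. y n = (1 - s) * m n + s * u n"
      using yC by (rule cset_memE) blast
    define la where "la = min t (1 - t)"
    have la0: "0 < la" using t0 t1 by (simp add: la_def)
    have la1: "la \<le> t" "la \<le> 1 - t" by (auto simp: la_def)
    define r where "r = (1 + la) * t - la * s"
    have "la * s \<le> la * 1" using la0 s by (intro mult_left_mono) auto
    moreover have "0 \<le> la * t" using la0 t0 by simp
    moreover have re: "r = t + la * t - la * s" by (simp add: r_def algebra_simps)
    ultimately have r0: "0 \<le> r" using la1 by linarith
    have "la * t \<le> (1 - t) * t" using la1 t0 by (intro mult_right_mono) auto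
    moreover have "0 < (1 - t) * (1 - t)" using t1 by simp
    moreover have "0 \<le> la * s" using la0 s by simp
    moreover have "t + (1 - t) * t = 1 - (1 - t) * (1 - t)" by (simp add: algebra_simps)
    ultimately have r1: "r < 1" using re by linarith
    define w where "w = (\<lambda>n. ((1 + la) * (1 - t)) * l n + (- (la * (1 - s))) * m n)"
    have wl: "w \<in> l1" unfolding w_def using t(3) s(3) by (rule l1_lin)
    define z where "z = (\<lambda>n. (1 + la) * x n - la * y n)"
    have zC: "z \<in> cset u"
    proof (rule cset_memI[of r "\<lambda>n. (1/(1-r)) * w n + 0 * w n"])
      show "0 \<le> r" "r \<le> 1" using r0 r1 by auto
      show "(\<lambda>n. (1/(1-r)) * w n + 0 * w n) \<in> l1" using wl wl by (rule l1_lin)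
      fix n
      have "z n = w n + r * u n" unfolding z_def w_def r_def
        by (simp add: xn yn algebra_simps)
      then show "z n = (1 - r) * ((1/(1-r)) * w n + 0 * w n) + r * u n" using r1 by simp
    qed
    have "x \<in> oseg y z"
    proof (rule osegI[of "1/(1+la)"])
      show "0 < 1/(1+la)" "1/(1+la) < 1" using la0 by auto
      fix n
      have e1: "(1 - 1/(1+la)) * y n + 1/(1+la) * z n = (la * y n + z n)/(1+la)"
      proof -
        have ne: "1 + la \<noteq> 0" using la0 by simp
        have "1 - 1/(1+la) = la/(1+la)" using ne by (simp add: field_simps)
        then show ?thesis by (simp add: add_divide_distrib)
      qed
      have e2: "la * y n + z n = (1+la) * x n" by (simp add: z_def)
      show "x n = (1 - 1/(1+la)) * y n + 1/(1+la) * z n"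
        unfolding e1 e2 using la0 by simp
    qed
    with zC show ?thesis by blast
  qed
  with assms show ?thesis by (simp add: icr_def)
qed

lemma l1_Fmin: assumes "x \<in> l1" shows "l1 \<subseteq> Fmin x (cset u)"
proof
  fix m assume ml: "m \<in> l1"
  show "m \<in> Fmin x (cset u)" unfolding Fmin_def
  proof
    fix F assume "F \<in> {F. is_face F (cset u) \<and> x \<in> F}"
    then have F: "is_face F (cset u)" "x \<in> F" by auto
    have m2: "(\<lambda>n. 2 * x n + (-1) * m n) \<in> l1" using assms ml by (rule l1_lin)
    have os: "x \<in> oseg m (\<lambda>n. 2 * x n + (-1) * m n)"
      by (rule osegI[of "1/2"]) (simp, simp, simp add: algebra_simps)
    have fa: "\<forall>x\<in>F. \<forall>y\<in>cset u. \<forall>z\<in>cset u. x \<in> oseg y z \<longrightarrow> y \<in> F \<and> z \<in> F"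
      using F(1) unfolding is_face_def by (elim conjE)
    have "m \<in> F \<and> (\<lambda>n. 2 * x n + (-1) * m n) \<in> F"
      using fa[rule_format, OF F(2) l1_in[OF ml] l1_in[OF m2] os] .
    then show "m \<in> F" by (rule conjunct1)
  qed
qed

lemma l2closure_mono: "A \<subseteq> B \<Longrightarrow> l2closure A \<subseteq> l2closure B"
  unfolding l2closure_def by blast

theorem mainTheorem20:
  fixes u :: "nat \<Rightarrow> real"
  assumes "u \<in> l2" and "u \<notin> l1"
  shows "icr (co (l1 \<union> {u})) = co (l1 \<union> {u}) - (l1 \<union> {u})
         \<and> icr (co (l1 \<union> {u})) \<noteq> {}
         \<and> l1 \<subseteq> fri (co (l1 \<union> {u}))
         \<and> icr (co (l1 \<union> {u})) \<noteq> fri (co (l1 \<union> {u}))"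
proof -
  have A1: "icr (cset u) \<subseteq> cset u - (l1 \<union> {u})" using icr_sub[OF assms(2)] by (rule subsetI)
  have A2: "cset u - (l1 \<union> {u}) \<subseteq> icr (cset u)" using icr_sup by (rule subsetI)
  have A: "icr (cset u) = cset u - (l1 \<union> {u})" using A1 A2 by (rule equalityI)
  have h1: "(\<lambda>n. (1/2) * u n) \<in> cset u" by (rule cset_memI[of "1/2" "\<lambda>n. 0"]) (simp_all add: l1_zero)
  have h2: "(\<lambda>n. (1/2) * u n) \<notin> l1"
  proof
    assume h: "(\<lambda>n. (1/2) * u n) \<in> l1"
    have "u \<in> l1" by (rule uniq[OF h, of "1/2"]) simp_all
    with assms(2) show False by simp
  qed
  have h3: "(\<lambda>n. (1/2) * u n) \<noteq> u"
  proof
    assume h: "(\<lambda>n. (1/2) * u n) = u"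
    have "u n = 0" for n using fun_cong[OF h, of n] by simp
    then have "u = (\<lambda>n. 0)" by (simp add: fun_eq_iff)
    with assms(2) l1_zero show False by simp
  qed
  have half: "(\<lambda>n. (1/2) * u n) \<in> icr (cset u)" unfolding A using h1 h2 h3 by simp
  have B: "icr (cset u) \<noteq> {}" using half by auto
  have D: "l1 \<subseteq> fri (cset u)"
  proof
    fix x assume xl: "x \<in> l1"
    have "cset u \<subseteq> l2closure l1"
    proof
      fix y assume "y \<in> cset u"
      then show "y \<in> l2closure l1" by (rule l2_closure_l1[OF cset_l2[OF assms(1)]])
    qed
    also have "\<dots> \<subseteq> l2closure (Fmin x (cset u))" using l1_Fmin[OF xl] by (rule l2closure_mono)
    finally show "x \<in> fri (cset u)" using l1_in[OF xl] by (simp add: fri_def)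
  qed
  have E: "icr (cset u) \<noteq> fri (cset u)"
  proof
    assume e: "icr (cset u) = fri (cset u)"
    have "(\<lambda>n. 0) \<in> fri (cset u)" using D l1_zero by (rule subsetD)
    then have "(\<lambda>n. 0) \<in> icr (cset u)" unfolding e .
    then show False unfolding A using l1_zero by simp
  qed
  show ?thesis unfolding co_eq by (intro conjI A B D E)
qed

end
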